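(* Let $A,B$ be Hermitian matrices and $H(t)=e^{iAt}Be^{-iAt}$. Let $t_j\in\mathbb{R}$, $h>0$, $t_{j+1}=t_j+h$, and $M$ a positive integer. Then $$\big\|U_2(t_{j+1},t_j)-\tilde U_2(t_{j+1},t_j)\big\|\le\frac{h^2}{M}\|[A,B]\|+\frac{3h^3}{M}\|B\|\,\|[A,B]\|.$$
   Context: $\|\cdot\|$ is the spectral norm. With $\mathcal{A}(t):=-iH(t)$, define $$\Omega_2(t_j+h,t_j):=\int_{t_j}^{t_j+h}\mathcal{A}(s)\,ds-\frac12\int_{t_j}^{t_j+h}\Big[\int_{t_j}^{s}\mathcal{A}(\sigma)\,d\sigma,\;\mathcal{A}(s)\Big]ds,\qquad U_2(t_{j+1},t_j):=e^{\Omega_2(t_j+h,t_j)},$$ and $$\tilde U_2(t_{j+1},t_j):=\exp\Big\{-i\sum_{p=0}^{M-1}H\big(t_j+\tfrac{ph}{M}\big)\frac{h}{M}+\frac12\sum_{p=0}^{M-1}\Big[\sum_{q=1}^{p}H\big(t_j+\tfrac{qh}{M}\big)\frac{h}{M},\;H\big(t_j+\tfrac{ph}{M}\big)\Big]\frac{h}{M}\Big\}.$$ *)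

theory Defs
  imports "HOL-Analysis.Analysis"
begin

type_synonym 'n cmat = "complex^'n^'n"

primrec matpow :: "'n::finite cmat \<Rightarrow> nat \<Rightarrow> 'n cmat" where
  "matpow X 0 = mat 1"
| "matpow X (Suc k) = X ** matpow X k"

definition mexp :: "'n::finite cmat \<Rightarrow> 'n cmat" where
  "mexp X = (\<Sum>k. (1 / fact k) *\<^sub>R matpow X k)"

definition cscale :: "complex \<Rightarrow> 'n::finite cmat \<Rightarrow> 'n cmat" where
  "cscale c X = (\<chi> i j. c * X $ i $ j)"

definition comm :: "'n::finite cmat \<Rightarrow> 'n cmat \<Rightarrow> 'n cmat" where
  "comm X Y = X ** Y - Y ** X"

definition hermitian :: "'n::finite cmat \<Rightarrow> bool" where
  "hermitian X \<longleftrightarrow> (\<forall>i j. X $ i $ j = cnj (X $ j $ i))"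

definition specnorm :: "'n::finite cmat \<Rightarrow> real" where
  "specnorm X = onorm (\<lambda>x. X *v x)"

definition Hfun :: "'n::finite cmat \<Rightarrow> 'n cmat \<Rightarrow> real \<Rightarrow> 'n cmat" where
  "Hfun A B t = mexp (cscale (\<i> * of_real t) A) ** B ** mexp (cscale (- \<i> * of_real t) A)"

definition Afun :: "'n::finite cmat \<Rightarrow> 'n cmat \<Rightarrow> real \<Rightarrow> 'n cmat" where
  "Afun A B t = cscale (- \<i>) (Hfun A B t)"

definition Omega2 :: "'n::finite cmat \<Rightarrow> 'n cmat \<Rightarrow> real \<Rightarrow> real \<Rightarrow> 'n cmat" where
  "Omega2 A B tj h =
     integral {tj..tj+h} (Afun A B)
     - (1/2) *\<^sub>R integral {tj..tj+h}
         (\<lambda>s. comm (integral {tj..s} (Afun A B)) (Afun A B s))"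

definition U2 :: "'n::finite cmat \<Rightarrow> 'n cmat \<Rightarrow> real \<Rightarrow> real \<Rightarrow> 'n cmat" where
  "U2 A B tj h = mexp (Omega2 A B tj h)"

definition U2tilde :: "'n::finite cmat \<Rightarrow> 'n cmat \<Rightarrow> real \<Rightarrow> real \<Rightarrow> nat \<Rightarrow> 'n cmat" where
  "U2tilde A B tj h M = mexp (
      cscale (- \<i>) (\<Sum>p<M. (h / real M) *\<^sub>R Hfun A B (tj + real p * h / real M))
    + (1/2) *\<^sub>R (\<Sum>p<M. (h / real M) *\<^sub>R
          comm (\<Sum>q\<in>{1..p}. (h / real M) *\<^sub>R Hfun A B (tj + real q * h / real M))
               (Hfun A B (tj + real p * h / real M))))"

end

theory Submission
  imports Defs "HOL-Analysis.Analysis"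
begin

typedef ('n::finite) opm = "UNIV :: (complex^'n^'n) set"
  morphisms mat_of Opm by simp

lemma mat_of_inject': "mat_of x = mat_of y \<longleftrightarrow> x = y" by (simp add: mat_of_inject)
lemma Opm_inv[simp]: "mat_of (Opm X) = X" by (simp add: Opm_inverse)
lemma mat_of_inv[simp]: "Opm (mat_of x) = x" by (simp add: mat_of_inverse)

lemma cmv_add: "(X::'n::finite cmat) *v (u + v) = X *v u + X *v v"
  by (simp add: matrix_vector_right_distrib)
lemma cmv_scaleR: "(X::'n::finite cmat) *v (r *\<^sub>R u) = r *\<^sub>R (X *v u)"
  by (simp add: vec_eq_iff matrix_vector_mult_def scaleR_sum_right)
lemma cmv_linear: "linear (\<lambda>u. (X::'n::finite cmat) *v u)"
  by (rule linearI) (simp_all add: cmv_add cmv_scaleR)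
lemma cmv_bl: "bounded_linear (\<lambda>u. (X::'n::finite cmat) *v u)"
  using cmv_linear linear_conv_bounded_linear by blast

lemma specnorm_ge: "norm (X *v u) \<le> specnorm X * norm u"
  unfolding specnorm_def using onorm[OF cmv_bl] by blast

lemma specnorm_nonneg: "0 \<le> specnorm X"
  unfolding specnorm_def using onorm_pos_le[OF cmv_bl] by blast

lemma specnorm_le: "(\<And>u. norm (X *v u) \<le> b * norm u) \<Longrightarrow> specnorm X \<le> b"
  unfolding specnorm_def by (rule onorm_le) auto

lemma cmv_axis: "((X::'n::finite cmat) *v axis j 1) $ i = X $ i $ j"
  by (simp add: matrix_vector_mult_def axis_def if_distrib cong: if_cong)

lemma norm_axis_c1[simp]: "norm (axis j (1::complex)) = 1"
proof -
  have "axis j (1::complex) \<in> Basis" by (auto simp: Basis_vec_def Basis_complex_def)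
  then show ?thesis by (rule norm_Basis)
qed

lemma entry_le_specnorm: "cmod (X $ i $ j) \<le> specnorm X"
proof -
  have "cmod (X $ i $ j) = cmod ((X *v axis j 1) $ i)" by (simp add: cmv_axis)
  also have "\<dots> \<le> norm (X *v axis j 1)" by (rule Finite_Cartesian_Product.norm_nth_le)
  also have "\<dots> \<le> specnorm X * norm (axis j (1::complex))" by (rule specnorm_ge)
  also have "\<dots> = specnorm X" by simp
  finally show ?thesis .
qed

lemma specnorm_zero_iff: "specnorm (X::'n::finite cmat) = 0 \<longleftrightarrow> X = 0"
proof
  assume "specnorm X = 0"
  then have "cmod (X $ i $ j) \<le> 0" for i j using entry_le_specnorm[of X i j] by simp
  then show "X = 0" by (simp add: vec_eq_iff)
next
  assume "X = 0"
  have e: "(*v) (0::'n cmat) = (\<lambda>x. 0)" by (rule ext) (simp add: vec_eq_iff matrix_vector_mult_def)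
  show "specnorm X = 0"
    unfolding specnorm_def \<open>X = 0\<close> e by (rule onorm_zero)
qed

lemma specnorm_triangle: "specnorm (X + Y) \<le> specnorm X + specnorm Y"
proof -
  have "(\<lambda>x. (X+Y) *v x) = (\<lambda>x. X *v x + Y *v x)" by (simp add: matrix_vector_mult_add_rdistrib)
  then show ?thesis unfolding specnorm_def using onorm_triangle[OF cmv_bl cmv_bl, of X Y] by simp
qed

lemma cmv_scaleR_mat: "(r *\<^sub>R X) *v u = r *\<^sub>R ((X::'n::finite cmat) *v u)"
  by (simp add: vec_eq_iff matrix_vector_mult_def scaleR_sum_right)

lemma specnorm_scaleR: "specnorm (r *\<^sub>R X) = \<bar>r\<bar> * specnorm X"
proof -
  have "(\<lambda>x. (r *\<^sub>R X) *v x) = (\<lambda>x. r *\<^sub>R (X *v x))" by (simp add: cmv_scaleR_mat)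
  then show ?thesis unfolding specnorm_def using onorm_scaleR[OF cmv_bl, of r X] by simp
qed

lemma specnorm_mult: "specnorm (X ** Y) \<le> specnorm X * specnorm Y"
proof -
  have "(\<lambda>x. (X ** Y) *v x) = (\<lambda>x. X *v x) o (\<lambda>x. Y *v x)" by (simp add: o_def matrix_vector_mul_assoc)
  then show ?thesis unfolding specnorm_def using onorm_compose[OF cmv_bl cmv_bl, of X Y] by simp
qed

lemma specnorm_one: "specnorm (mat 1 :: 'n::finite cmat) = 1"
proof -
  have e: "(*v) (mat 1::'n cmat) = (\<lambda>x. x)" by (rule ext) (simp add: matrix_vector_mul_lid)
  show ?thesis unfolding specnorm_def e by (rule onorm_id)
qed

lemma vnorm_le_sum: "norm (x::'a::real_normed_vector^'n::finite) \<le> (\<Sum>i\<in>UNIV. norm (x $ i))"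
  by (simp add: norm_vec_def L2_set_le_sum)

lemma specnorm_le_frob: "specnorm X \<le> real (CARD('n)) * real (CARD('n)) * norm (X::'n::finite cmat)"
proof (rule specnorm_le)
  fix u :: "complex^'n"
  have "norm (X *v u) \<le> (\<Sum>i\<in>UNIV. norm ((X *v u) $ i))" by (rule vnorm_le_sum)
  also have "\<dots> \<le> (\<Sum>i\<in>(UNIV::'n set). (\<Sum>j\<in>(UNIV::'n set). norm X * norm u))"
  proof (rule sum_mono)
    fix i
    have "norm ((X *v u) $ i) = norm (\<Sum>j\<in>UNIV. X $ i $ j * u $ j)" by (simp add: matrix_vector_mult_def)
    also have "\<dots> \<le> (\<Sum>j\<in>UNIV. norm (X $ i $ j * u $ j))" by (rule norm_sum)
    also have "\<dots> \<le> (\<Sum>j\<in>(UNIV::'n set). norm X * norm u)"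
    proof (rule sum_mono)
      fix j
      have "norm (X $ i $ j) \<le> norm X"
        by (meson Finite_Cartesian_Product.norm_nth_le order_trans)
      moreover have "norm (u $ j) \<le> norm u" by (rule Finite_Cartesian_Product.norm_nth_le)
      ultimately show "norm (X $ i $ j * u $ j) \<le> norm X * norm u"
        by (simp add: norm_mult mult_mono)
    qed
    finally show "norm ((X *v u) $ i) \<le> (\<Sum>j\<in>(UNIV::'n set). norm X * norm u)" .
  qed
  also have "\<dots> = real (CARD('n)) * real (CARD('n)) * norm X * norm u" by simp
  finally show "norm (X *v u) \<le> real (CARD('n)) * real (CARD('n)) * norm X * norm u" .
qed

lemma frob_le_specnorm: "norm (X::'n::finite cmat) \<le> real (CARD('n)) * real (CARD('n)) * specnorm X"
proof -
  have "norm X \<le> (\<Sum>i\<in>UNIV. norm (X $ i))" by (rule vnorm_le_sum)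
  also have "\<dots> \<le> (\<Sum>i\<in>(UNIV::'n set). (\<Sum>j\<in>(UNIV::'n set). specnorm X))"
  proof (rule sum_mono)
    fix i
    have "norm (X $ i) \<le> (\<Sum>j\<in>UNIV. norm (X $ i $ j))" by (rule vnorm_le_sum)
    also have "\<dots> \<le> (\<Sum>j\<in>(UNIV::'n set). specnorm X)"
      by (rule sum_mono) (rule entry_le_specnorm)
    finally show "norm (X $ i) \<le> (\<Sum>j\<in>(UNIV::'n set). specnorm X)" .
  qed
  also have "\<dots> = real (CARD('n)) * real (CARD('n)) * specnorm X" by simp
  finally show ?thesis .
qed


lemma mm_add_r: "((A::'n::finite cmat) + B) ** C = A ** C + B ** C"
  by (vector matrix_matrix_mult_def sum.distrib[symmetric] field_simps)
lemma mm_scaleR_l: "(r *\<^sub>R (A::'n::finite cmat)) ** B = r *\<^sub>R (A ** B)"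
  by (simp add: vec_eq_iff matrix_matrix_mult_def scaleR_sum_right)
lemma mm_scaleR_r: "(A::'n::finite cmat) ** (r *\<^sub>R B) = r *\<^sub>R (A ** B)"
  by (simp add: vec_eq_iff matrix_matrix_mult_def scaleR_sum_right)

instantiation opm :: (finite) real_normed_algebra_1
begin
definition zero_opm :: "'a::finite opm" where "zero_opm = Opm 0"
definition one_opm :: "'a::finite opm" where "one_opm = Opm (mat 1)"
definition plus_opm :: "'a::finite opm \<Rightarrow> 'a opm \<Rightarrow> 'a opm" where "plus_opm x y = Opm (mat_of x + mat_of y)"
definition minus_opm :: "'a::finite opm \<Rightarrow> 'a opm \<Rightarrow> 'a opm" where "minus_opm x y = Opm (mat_of x - mat_of y)"
definition uminus_opm :: "'a::finite opm \<Rightarrow> 'a opm" where "uminus_opm x = Opm (- mat_of x)"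
definition times_opm :: "'a::finite opm \<Rightarrow> 'a opm \<Rightarrow> 'a opm" where "times_opm x y = Opm (mat_of x ** mat_of y)"
definition scaleR_opm :: "real \<Rightarrow> 'a::finite opm \<Rightarrow> 'a opm" where "scaleR_opm r x = Opm (r *\<^sub>R mat_of x)"
definition norm_opm :: "'a::finite opm \<Rightarrow> real" where "norm_opm x = specnorm (mat_of x)"
definition sgn_opm :: "'a::finite opm \<Rightarrow> 'a opm" where "sgn_opm x = Opm (inverse (norm x) *\<^sub>R mat_of x)"
definition dist_opm :: "'a::finite opm \<Rightarrow> 'a opm \<Rightarrow> real" where "dist_opm x y = norm (x - y)"
definition uniformity_opm :: "('a opm \<times> 'a opm) filter" where
  "uniformity_opm = (INF e\<in>{0<..}. principal {(x, y). dist x y < e})"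
definition open_opm :: "'a::finite opm set \<Rightarrow> bool" where
  "open_opm U = (\<forall>x\<in>U. \<forall>\<^sub>F (x', y) in uniformity. x' = x \<longrightarrow> y \<in> U)"
instance
proof
  fix x y z :: "'a opm" and a b :: real
  show "x + y + z = x + (y + z)" by (simp add: plus_opm_def add.assoc)
  show "x + y = y + x" by (simp add: plus_opm_def add.commute)
  show "0 + x = x" by (simp add: plus_opm_def zero_opm_def)
  show "- x + x = 0" by (simp add: plus_opm_def zero_opm_def uminus_opm_def)
  show "x - y = x + - y" by (simp add: plus_opm_def minus_opm_def uminus_opm_def)
  show "a *\<^sub>R (x + y) = a *\<^sub>R x + a *\<^sub>R y" by (simp add: plus_opm_def scaleR_opm_def scaleR_right_distrib)
  show "(a + b) *\<^sub>R x = a *\<^sub>R x + b *\<^sub>R x" by (simp add: plus_opm_def scaleR_opm_def scaleR_left_distrib)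
  show "a *\<^sub>R b *\<^sub>R x = (a * b) *\<^sub>R x" by (simp add: scaleR_opm_def)
  show "1 *\<^sub>R x = x" by (simp add: scaleR_opm_def)
  show "x * y * z = x * (y * z)" by (simp add: times_opm_def matrix_mul_assoc)
  show "(x + y) * z = x * z + y * z" by (simp add: times_opm_def plus_opm_def mm_add_r)
  show "x * (y + z) = x * y + x * z" by (simp add: times_opm_def plus_opm_def matrix_add_ldistrib)
  show "1 * x = x" by (simp add: times_opm_def one_opm_def)
  show "x * 1 = x" by (simp add: times_opm_def one_opm_def)
  show "(0::'a opm) \<noteq> 1"
  proof
    assume "(0::'a opm) = 1"
    then have "(0::'a cmat) = mat 1" by (metis Opm_inv zero_opm_def one_opm_def)
    then have "specnorm (0::'a cmat) = specnorm (mat 1::'a cmat)" by simp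
    then show False using specnorm_zero_iff[of "0::'a cmat"] by (simp add: specnorm_one)
  qed
  show "a *\<^sub>R x * y = a *\<^sub>R (x * y)" by (simp add: scaleR_opm_def times_opm_def mm_scaleR_l)
  show "x * a *\<^sub>R y = a *\<^sub>R (x * y)" by (simp add: scaleR_opm_def times_opm_def mm_scaleR_r)
  show "dist x y = norm (x - y)" by (simp add: dist_opm_def)
  show "sgn x = inverse (norm x) *\<^sub>R x" by (simp add: sgn_opm_def scaleR_opm_def)
  show "(uniformity :: ('a opm \<times> 'a opm) filter) = (INF e\<in>{0<..}. principal {(x, y). dist x y < e})" by (simp add: uniformity_opm_def)
  show "norm (x + y) \<le> norm x + norm y" by (simp add: norm_opm_def plus_opm_def specnorm_triangle)
  show "norm (a *\<^sub>R x) = \<bar>a\<bar> * norm x" by (simp add: norm_opm_def scaleR_opm_def specnorm_scaleR)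
  show "(norm x = 0) = (x = 0)" by (metis Opm_inv mat_of_inv norm_opm_def specnorm_zero_iff zero_opm_def)
  show "norm (x * y) \<le> norm x * norm y" by (simp add: norm_opm_def times_opm_def specnorm_mult)
  show "norm (1::'a opm) = 1" by (simp add: norm_opm_def one_opm_def specnorm_one)
next
  fix U :: "'a opm set"
  show "open U = (\<forall>x\<in>U. \<forall>\<^sub>F (x', y) in uniformity. x' = x \<longrightarrow> y \<in> U)" by (simp add: open_opm_def)
qed
end

lemma mat_of_add[simp]: "mat_of (x + y) = mat_of x + mat_of y" by (simp add: plus_opm_def)
lemma mat_of_diff[simp]: "mat_of (x - y) = mat_of x - mat_of y" by (simp add: minus_opm_def)
lemma mat_of_uminus[simp]: "mat_of (- x) = - mat_of x" by (simp add: uminus_opm_def)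
lemma mat_of_scaleR[simp]: "mat_of (r *\<^sub>R x) = r *\<^sub>R mat_of x" by (simp add: scaleR_opm_def)
lemma mat_of_times[simp]: "mat_of (x * y) = mat_of x ** mat_of y" by (simp add: times_opm_def)
lemma mat_of_zero[simp]: "mat_of 0 = 0" by (simp add: zero_opm_def)
lemma mat_of_one[simp]: "mat_of 1 = mat 1" by (simp add: one_opm_def)
lemma norm_opm_specnorm: "norm x = specnorm (mat_of x)" by (simp add: norm_opm_def)

lemma Opm_add: "Opm (X + Y) = Opm X + Opm Y" by (simp add: plus_opm_def)
lemma Opm_diff: "Opm (X - Y) = Opm X - Opm Y" by (simp add: minus_opm_def)
lemma Opm_uminus: "Opm (- X) = - Opm X" by (simp add: uminus_opm_def)
lemma Opm_scaleR: "Opm (r *\<^sub>R X) = r *\<^sub>R Opm X" by (simp add: scaleR_opm_def)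
lemma Opm_mult: "Opm (X ** Y) = Opm X * Opm Y" by (simp add: times_opm_def)
lemma Opm_zero: "Opm 0 = 0" by (simp add: zero_opm_def)
lemma Opm_one: "Opm (mat 1) = 1" by (simp add: one_opm_def)
lemma specnorm_Opm: "specnorm X = norm (Opm X)" by (simp add: norm_opm_def)
lemma Opm_sum: "Opm (sum f S) = (\<Sum>x\<in>S. Opm (f x))"
  by (induction S rule: infinite_finite_induct) (simp_all add: Opm_zero Opm_add)

lemma bl_mat_of: "bounded_linear (mat_of :: 'n::finite opm \<Rightarrow> 'n cmat)"
proof (rule bounded_linear_intro[where K="real (CARD('n)) * real (CARD('n))"])
  fix x :: "'n opm"
  show "norm (mat_of x) \<le> norm x * (real CARD('n) * real CARD('n))"
    using frob_le_specnorm[of "mat_of x"] by (simp add: norm_opm_def mult.commute)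
qed simp_all

lemma bl_Opm: "bounded_linear (Opm :: 'n::finite cmat \<Rightarrow> 'n opm)"
proof (rule bounded_linear_intro[where K="real (CARD('n)) * real (CARD('n))"])
  fix x :: "'n cmat"
  show "norm (Opm x) \<le> norm x * (real CARD('n) * real CARD('n))"
    using specnorm_le_frob[of x] by (simp add: norm_opm_def mult.commute)
qed (simp_all add: Opm_add Opm_scaleR)

instance opm :: (finite) banach
proof
  fix X :: "nat \<Rightarrow> 'a opm"
  assume "Cauchy X"
  then have "Cauchy (\<lambda>n. mat_of (X n))" by (rule bounded_linear.Cauchy[OF bl_mat_of])
  then obtain L where "(\<lambda>n. mat_of (X n)) \<longlonglongrightarrow> L" using Cauchy_convergent_iff convergent_def by blast
  then have "(\<lambda>n. Opm (mat_of (X n))) \<longlonglongrightarrow> Opm L" by (rule bounded_linear.tendsto[OF bl_Opm])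
  then show "convergent X" by (auto simp: convergent_def)
qed


lemma Opm_matpow: "Opm (matpow X k) = (Opm X) ^ k"
  by (induction k) (simp_all add: Opm_one Opm_mult)

lemma mat_of_pow: "matpow X k = mat_of ((Opm X) ^ k)"
  by (metis Opm_inv Opm_matpow mat_of_inv)

lemma mexp_exp: "mexp X = mat_of (exp (Opm X))"
proof -
  have "mexp X = (\<Sum>k. mat_of ((Opm X)^k /\<^sub>R fact k))"
    unfolding mexp_def mat_of_pow by (simp add: divide_inverse)
  also have "\<dots> = mat_of (\<Sum>k. (Opm X)^k /\<^sub>R fact k)"
    by (rule bounded_linear.suminf[OF bl_mat_of summable_exp_generic, symmetric])
  also have "\<dots> = mat_of (exp (Opm X))" by (simp add: exp_def)
  finally show ?thesis .
qed

lemma Opm_mexp: "Opm (mexp X) = exp (Opm X)"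
  by (simp add: mexp_exp)


lemma cscale_mult_l: "cscale c X ** Y = cscale c (X ** Y)"
  by (simp add: vec_eq_iff matrix_matrix_mult_def cscale_def sum_distrib_left mult.assoc)
lemma cscale_mult_r: "X ** cscale c Y = cscale c (X ** Y)"
  by (simp add: vec_eq_iff matrix_matrix_mult_def cscale_def sum_distrib_left mult.left_commute)
lemma cscale_cscale: "cscale c (cscale d X) = cscale (c * d) X"
  by (simp add: vec_eq_iff cscale_def mult.assoc)
lemma cscale_add: "cscale c (X + Y) = cscale c X + cscale c Y"
  by (simp add: vec_eq_iff cscale_def distrib_left)
lemma cscale_diff: "cscale c (X - Y) = cscale c X - cscale c Y"
  by (simp add: vec_eq_iff cscale_def right_diff_distrib)
lemma cscale_scaleR: "cscale c (r *\<^sub>R X) = r *\<^sub>R cscale c X"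
  by (simp add: vec_eq_iff cscale_def)
lemma cscale_zero: "cscale c 0 = 0"
  by (simp add: vec_eq_iff cscale_def)
lemma cscale_sum: "cscale c (sum f S) = (\<Sum>x\<in>S. cscale c (f x))"
  by (induction S rule: infinite_finite_induct) (simp_all add: cscale_zero cscale_add)
lemma cscale_one: "cscale 1 X = X"
  by (simp add: vec_eq_iff cscale_def)
lemma cscale_m1: "cscale (-1) X = - X"
  by (simp add: vec_eq_iff cscale_def)
lemma cplx_scaleR: "t *\<^sub>R (z::complex) = of_real t * z" by (simp add: scaleR_conv_of_real)
lemma cscale_real: "cscale (c * of_real t) X = t *\<^sub>R cscale c X"
  by (simp add: vec_eq_iff cscale_def cplx_scaleR mult.commute mult.left_commute)
lemma comm_cscale: "comm (cscale c X) (cscale d Y) = cscale (c * d) (comm X Y)"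
  by (simp add: comm_def cscale_mult_l cscale_mult_r cscale_cscale cscale_diff mult.commute)
lemma Opm_comm: "Opm (comm X Y) = Opm X * Opm Y - Opm Y * Opm X"
  by (simp add: comm_def Opm_diff Opm_mult)

lemma Afun_opm:
  "Opm (Afun A B t) = exp (t *\<^sub>R Opm (cscale \<i> A)) * Opm (cscale (- \<i>) B) * exp (t *\<^sub>R (- Opm (cscale \<i> A)))"
proof -
  have e1: "cscale (\<i> * of_real t) A = t *\<^sub>R cscale \<i> A" by (rule cscale_real)
  have "cscale (- \<i> * of_real t) A = t *\<^sub>R cscale (- \<i>) A" by (rule cscale_real)
  also have "cscale (- \<i>) A = - cscale \<i> A"
    using cscale_cscale[of "-1" "\<i>" A] by (simp add: cscale_m1)
  finally have e2: "cscale (- (\<i> * of_real t)) A = t *\<^sub>R (- cscale \<i> A)" by simp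
  have "Afun A B t = mexp (cscale (\<i> * of_real t) A) ** cscale (- \<i>) B ** mexp (cscale (- \<i> * of_real t) A)"
    unfolding Afun_def Hfun_def by (simp add: cscale_mult_l cscale_mult_r)
  then show ?thesis
    by (simp add: Opm_mult Opm_mexp e1 e2 Opm_scaleR Opm_uminus)
qed

lemma Hfun_Afun: "Hfun A B t = cscale \<i> (Afun A B t)"
  by (simp add: Afun_def cscale_cscale cscale_one)


definition skew :: "'n::finite opm \<Rightarrow> bool" where
  "skew x \<longleftrightarrow> (\<forall>v. inner (mat_of x *v v) v = 0)"

lemma inner_cplx: "inner (z::complex) w = Re (z * cnj w)"
  by (simp add: inner_complex_def)

lemma skew_herm:
  fixes X :: "'n::finite cmat"
  assumes "hermitian X"
  shows "skew (Opm (cscale \<i> X))"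
  unfolding skew_def
proof
  fix v :: "complex^'n"
  define S where "S = (\<Sum>k\<in>UNIV. \<Sum>l\<in>UNIV. X$k$l * v$l * cnj (v$k))"
  have hx: "cnj (X$k$l) = X$l$k" for k l
    using assms unfolding hermitian_def by (metis complex_cnj_cnj)
  have "cnj S = (\<Sum>k\<in>UNIV. \<Sum>l\<in>UNIV. X$l$k * cnj (v$l) * v$k)"
    unfolding S_def by (simp add: hx)
  also have "\<dots> = S" unfolding S_def
    by (subst sum.swap) (simp add: mult.commute mult.left_commute)
  finally have "cnj S = S" .
  then have imS: "Im S = 0" by (metis complex.sel(2) cnj.simps(2) equation_minus_iff neg_equal_zero)
  have "inner (cscale \<i> X *v v) v = (\<Sum>k\<in>UNIV. Re ((\<Sum>l\<in>UNIV. \<i> * X$k$l * v$l) * cnj (v$k)))"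
    by (simp add: inner_vec_def inner_cplx matrix_vector_mult_def cscale_def)
  also have "\<dots> = Re (\<i> * S)"
    by (simp add: S_def sum_distrib_left sum_distrib_right Re_sum mult.assoc)
  also have "\<dots> = 0" using imS by simp
  finally show "inner (mat_of (Opm (cscale \<i> X)) *v v) v = 0" by simp
qed


lemma skew_zero: "skew 0" by (simp add: skew_def matrix_vector_mult_def inner_vec_def)

lemma skew_add: "skew x \<Longrightarrow> skew y \<Longrightarrow> skew (x + y)"
  by (simp add: skew_def matrix_vector_mult_add_rdistrib inner_add_left)

lemma skew_scaleR: "skew x \<Longrightarrow> skew (r *\<^sub>R x)"
  by (simp add: skew_def cmv_scaleR_mat)

lemma skew_uminus: "skew x \<Longrightarrow> skew (- x)"
  using skew_scaleR[of x "-1"] by simp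

lemma skew_diff: "skew x \<Longrightarrow> skew y \<Longrightarrow> skew (x - y)"
  using skew_add[of x "- y"] skew_uminus[of y] by simp

lemma skew_sum: "(\<And>i. i \<in> S \<Longrightarrow> skew (f i)) \<Longrightarrow> skew (sum f S)"
  by (induction S rule: infinite_finite_induct) (simp_all add: skew_zero skew_add)

lemma skew_anti:
  assumes "skew x"
  shows "inner (mat_of x *v u) w = - inner u (mat_of x *v w)"
proof -
  have "inner (mat_of x *v (u + w)) (u + w) = 0" using assms skew_def by blast
  moreover have "inner (mat_of x *v u) u = 0" "inner (mat_of x *v w) w = 0" using assms skew_def by blast+
  ultimately show ?thesis by (simp add: cmv_add inner_add_left inner_add_right inner_commute)
qed

lemma skew_comm: "skew x \<Longrightarrow> skew y \<Longrightarrow> skew (x * y - y * x)"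
  unfolding skew_def
proof (intro allI)
  fix v
  assume sx: "\<forall>v. inner (mat_of x *v v) v = 0" and sy: "\<forall>v. inner (mat_of y *v v) v = 0"
  then have sx': "skew x" and sy': "skew y" by (simp_all add: skew_def)
  have "inner (mat_of (x * y - y * x) *v v) v
     = inner (mat_of x *v (mat_of y *v v)) v - inner (mat_of y *v (mat_of x *v v)) v"
    by (simp add: matrix_vector_mult_add_rdistrib matrix_vector_mul_assoc inner_diff_left
         matrix_vector_mult_diff_rdistrib)
  also have "\<dots> = 0"
    using skew_anti[OF sx', of "mat_of y *v v" v] skew_anti[OF sy', of "mat_of x *v v" v]
    by (simp add: inner_commute)
  finally show "inner (mat_of (x * y - y * x) *v v) v = 0" .
qed

lemma bl_phi: "bounded_linear (\<lambda>x::'n::finite opm. inner (mat_of x *v v) v)"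
proof -
  have "bounded_linear (\<lambda>X::'n cmat. X *v v)"
    by (rule linear_conv_bounded_linear[THEN iffD1], rule linearI)
       (simp_all add: matrix_vector_mult_add_rdistrib cmv_scaleR_mat)
  then have "bounded_linear ((\<lambda>X::'n cmat. X *v v) o mat_of)"
    using bl_mat_of bounded_linear_compose by (auto simp: o_def)
  then have "bounded_linear ((\<lambda>y. inner y v) o ((\<lambda>X::'n cmat. X *v v) o mat_of))"
    using bounded_linear_inner_left bounded_linear_compose by (auto simp: o_def)
  then show ?thesis by (simp add: o_def)
qed

lemma skew_integral:
  fixes f :: "'a::euclidean_space \<Rightarrow> 'n::finite opm"
  assumes "\<And>s. s \<in> S \<Longrightarrow> skew (f s)"
  shows "skew (integral S f)"
proof (cases "f integrable_on S")
  case True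
  show ?thesis unfolding skew_def
  proof
    fix v :: "complex^'n"
    have "inner (mat_of (integral S f) *v v) v = integral S ((\<lambda>x. inner (mat_of x *v v) v) o f)"
      by (rule integral_linear[OF True bl_phi, symmetric])
    also have "\<dots> = integral S (\<lambda>_. 0::real)"
      by (rule integral_cong) (use assms in \<open>auto simp: skew_def\<close>)
    also have "\<dots> = 0" by simp
    finally show "inner (mat_of (integral S f) *v v) v = 0" .
  qed
next
  case False
  then show ?thesis by (simp add: not_integrable_integral skew_zero)
qed


lemma bl_psi: "bounded_linear (\<lambda>x::'n::finite opm. mat_of x *v v)"
proof -
  have "bounded_linear (\<lambda>X::'n cmat. X *v v)"
    by (rule linear_conv_bounded_linear[THEN iffD1], rule linearI)
       (simp_all add: matrix_vector_mult_add_rdistrib cmv_scaleR_mat)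
  then have "bounded_linear ((\<lambda>X::'n cmat. X *v v) o mat_of)"
    using bl_mat_of bounded_linear_compose by (auto simp: o_def)
  then show ?thesis by (simp add: o_def)
qed

lemma exp_iso:
  fixes x :: "'n::finite opm"
  assumes "skew x"
  shows "norm (mat_of (exp (t *\<^sub>R x)) *v v) = norm v"
proof -
  define F where "F t = mat_of (exp (t *\<^sub>R x)) *v v" for t
  have dF: "(F has_vector_derivative (mat_of x *v F s)) (at s)" for s
  proof -
    have "(F has_vector_derivative (mat_of (x * exp (s *\<^sub>R x)) *v v)) (at s)"
      unfolding F_def by (rule bounded_linear.has_vector_derivative[OF bl_psi exp_scaleR_has_vector_derivative_left])
    then show ?thesis by (simp add: F_def matrix_vector_mul_assoc)
  qed
  define g where "g t = inner (F t) (F t)" for t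
  have "(g has_vector_derivative (inner (F s) (mat_of x *v F s) + inner (mat_of x *v F s) (F s))) (at s)" for s
    unfolding g_def by (rule bounded_bilinear.has_vector_derivative[OF bounded_bilinear_inner dF dF])
  moreover have "inner (mat_of x *v F s) (F s) = 0" for s using assms skew_def by blast
  ultimately have "(g has_real_derivative 0) (at s)" for s
    by (simp add: has_real_derivative_iff_has_vector_derivative inner_commute)
  then have "g t = g 0" by (intro DERIV_isconst_all) auto
  moreover have "F 0 = v" by (simp add: F_def matrix_vector_mul_lid)
  ultimately have "inner (F t) (F t) = inner v v" by (simp add: g_def)
  then have "(norm (F t))^2 = (norm v)^2" by (simp add: power2_norm_eq_inner)
  then show ?thesis unfolding F_def by (simp add: power2_eq_iff_nonneg)
qed

lemma norm_exp_skew: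
  fixes x :: "'n::finite opm"
  assumes "skew x"
  shows "norm (exp (t *\<^sub>R x)) \<le> 1"
  unfolding norm_opm_specnorm
  by (rule specnorm_le) (simp add: exp_iso[OF assms])

lemma iso_inner:
  fixes U :: "'n::finite cmat"
  assumes "\<And>v. norm (U *v v) = norm v"
  shows "inner (U *v a) (U *v b) = inner a b"
proof -
  have "inner (U *v (a + b)) (U *v (a + b)) = inner (a + b) (a + b)"
    using assms[of "a+b"] by (simp add: power2_norm_eq_inner[symmetric])
  moreover have "inner (U *v a) (U *v a) = inner a a" "inner (U *v b) (U *v b) = inner b b"
    using assms by (simp_all add: power2_norm_eq_inner[symmetric])
  ultimately show ?thesis
    by (simp add: cmv_add inner_add_left inner_add_right inner_commute)
qed

lemma exp_inv:
  fixes x :: "'n::finite opm"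
  shows "exp (t *\<^sub>R x) * exp (t *\<^sub>R (- x)) = 1"
proof -
  have "exp (t *\<^sub>R x + t *\<^sub>R (- x)) = exp (t *\<^sub>R x) * exp (t *\<^sub>R (- x))"
    by (rule exp_add_commuting) simp
  then show ?thesis by simp
qed

lemma skew_conj:
  fixes x b :: "'n::finite opm"
  assumes sx: "skew x" and sb: "skew b"
  shows "skew (exp (t *\<^sub>R x) * b * exp (t *\<^sub>R (- x)))"
  unfolding skew_def
proof
  fix v :: "complex^'n"
  define U where "U = mat_of (exp (t *\<^sub>R x))"
  define W where "W = mat_of (exp (t *\<^sub>R (- x)))"
  define w where "w = W *v v"
  have UW: "U ** W = mat 1" unfolding U_def W_def
    using exp_inv[of t x] by (metis mat_of_one mat_of_times)
  have v: "v = U *v w" unfolding w_def by (simp add: matrix_vector_mul_assoc UW matrix_vector_mul_lid)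
  have iso: "norm (U *v u) = norm u" for u unfolding U_def by (rule exp_iso[OF sx])
  have e: "mat_of (exp (t *\<^sub>R x) * b * exp (t *\<^sub>R (- x))) *v v = U *v (mat_of b *v w)"
    unfolding U_def W_def w_def by (simp only: mat_of_times matrix_vector_mul_assoc matrix_mul_assoc)
  have "inner (mat_of (exp (t *\<^sub>R x) * b * exp (t *\<^sub>R (- x))) *v v) v
      = inner (U *v (mat_of b *v w)) v" by (simp only: e)
  also have "\<dots> = inner (U *v (mat_of b *v w)) (U *v w)" by (simp only: v[symmetric])
  also have "\<dots> = inner (mat_of b *v w) w" by (rule iso_inner[OF iso])
  also have "\<dots> = 0" using sb skew_def by blast
  finally show "inner (mat_of (exp (t *\<^sub>R x) * b * exp (t *\<^sub>R (- x))) *v v) v = 0" .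
qed


lemma vd_bound:
  fixes f :: "real \<Rightarrow> 'b::real_normed_vector"
  assumes d: "\<And>x. (f has_vector_derivative f' x) (at x)"
    and b: "\<And>x. norm (f' x) \<le> B"
  shows "norm (f x - f y) \<le> B * \<bar>x - y\<bar>"
proof -
  have "norm (f x - f y) \<le> B * norm (x - y)"
  proof (rule differentiable_bound[where S=UNIV and f'="\<lambda>x h. h *\<^sub>R f' x"])
    fix z :: real
    show "(f has_derivative (\<lambda>h. h *\<^sub>R f' z)) (at z within UNIV)"
      using d[of z] by (simp add: has_vector_derivative_def)
    show "onorm (\<lambda>h. h *\<^sub>R f' z) \<le> B"
    proof (rule onorm_le)
      fix h :: real
      show "norm (h *\<^sub>R f' z) \<le> B * norm h"
        using b[of z] by (simp add: mult.commute[of B] mult_left_mono)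
    qed
  qed auto
  then show ?thesis by simp
qed

lemma norm3: "norm ((x::'a::real_normed_algebra) * y * z) \<le> norm x * norm y * norm z"
proof -
  have "norm (x * y * z) \<le> norm (x * y) * norm z" by (rule norm_mult_ineq)
  also have "\<dots> \<le> norm x * norm y * norm z" by (intro mult_right_mono norm_mult_ineq norm_ge_zero)
  finally show ?thesis .
qed

definition alpha :: "'n::finite opm \<Rightarrow> 'n opm \<Rightarrow> real \<Rightarrow> 'n opm" where
  "alpha a b t = exp (t *\<^sub>R a) * b * exp (t *\<^sub>R (- a))"

lemma alpha_deriv:
  "(alpha a b has_vector_derivative (exp (t *\<^sub>R a) * (a * b - b * a) * exp (t *\<^sub>R (- a)))) (at t)"
proof -
  have d1: "((\<lambda>t. exp (t *\<^sub>R a) * b) has_vector_derivative (exp (t *\<^sub>R a) * a * b)) (at t)"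
    by (rule has_vector_derivative_mult_left[OF exp_scaleR_has_vector_derivative_right])
  have "((\<lambda>t. exp (t *\<^sub>R a) * b * exp (t *\<^sub>R (- a))) has_vector_derivative
     (exp (t *\<^sub>R a) * b * ((- a) * exp (t *\<^sub>R (- a))) + exp (t *\<^sub>R a) * a * b * exp (t *\<^sub>R (- a)))) (at t)"
    by (rule has_vector_derivative_mult[OF d1 exp_scaleR_has_vector_derivative_left])
  moreover have "exp (t *\<^sub>R a) * b * ((- a) * exp (t *\<^sub>R (- a))) + exp (t *\<^sub>R a) * a * b * exp (t *\<^sub>R (- a))
      = exp (t *\<^sub>R a) * (a * b - b * a) * exp (t *\<^sub>R (- a))"
    by (simp add: algebra_simps)
  ultimately show ?thesis unfolding alpha_def by simp
qed

lemma alpha_cont: "continuous_on S (alpha a b)"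
  by (rule continuous_on_vector_derivative) (rule has_vector_derivative_at_within[OF alpha_deriv])

lemma alpha_skew: "skew a \<Longrightarrow> skew b \<Longrightarrow> skew (alpha a b t)"
  unfolding alpha_def by (rule skew_conj)

lemma alpha_norm:
  assumes "skew a"
  shows "norm (alpha a b t) \<le> norm b"
proof -
  have "norm (alpha a b t) \<le> norm (exp (t *\<^sub>R a)) * norm b * norm (exp (t *\<^sub>R (- a)))"
    unfolding alpha_def by (rule norm3)
  also have "\<dots> \<le> 1 * norm b * 1"
    using norm_exp_skew[OF assms, of t] norm_exp_skew[OF skew_uminus[OF assms], of t]
    by (intro mult_mono) auto
  finally show ?thesis by simp
qed

lemma alpha_lip:
  assumes "skew a"
  shows "norm (alpha a b s - alpha a b t) \<le> norm (a * b - b * a) * \<bar>s - t\<bar>"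
proof (rule vd_bound[OF alpha_deriv])
  fix x
  have "norm (exp (x *\<^sub>R a) * (a * b - b * a) * exp (x *\<^sub>R (- a)))
     \<le> norm (exp (x *\<^sub>R a)) * norm (a * b - b * a) * norm (exp (x *\<^sub>R (- a)))"
    by (rule norm3)
  also have "\<dots> \<le> 1 * norm (a * b - b * a) * 1"
    using norm_exp_skew[OF assms, of x] norm_exp_skew[OF skew_uminus[OF assms], of x]
    by (intro mult_mono) auto
  finally show "norm (exp (x *\<^sub>R a) * (a * b - b * a) * exp (x *\<^sub>R (- a))) \<le> norm (a * b - b * a)" by simp
qed


lemma exp_diff_skew:
  fixes X Y :: "'n::finite opm"
  assumes sX: "skew X" and sY: "skew Y"
  shows "norm (exp X - exp Y) \<le> norm (X - Y)"
proof -
  define k where "k s = exp (s *\<^sub>R X) * exp (s *\<^sub>R (- Y))" for s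
  have dk: "(k has_vector_derivative (exp (s *\<^sub>R X) * (X - Y) * exp (s *\<^sub>R (- Y)))) (at s)" for s
  proof -
    have "(k has_vector_derivative (exp (s *\<^sub>R X) * ((- Y) * exp (s *\<^sub>R (- Y))) + exp (s *\<^sub>R X) * X * exp (s *\<^sub>R (- Y)))) (at s)"
      unfolding k_def by (rule has_vector_derivative_mult[OF exp_scaleR_has_vector_derivative_right exp_scaleR_has_vector_derivative_left])
    moreover have "exp (s *\<^sub>R X) * ((- Y) * exp (s *\<^sub>R (- Y))) + exp (s *\<^sub>R X) * X * exp (s *\<^sub>R (- Y))
        = exp (s *\<^sub>R X) * (X - Y) * exp (s *\<^sub>R (- Y))"
      by (simp add: algebra_simps)
    ultimately show ?thesis by simp
  qed
  have bk: "norm (exp (s *\<^sub>R X) * (X - Y) * exp (s *\<^sub>R (- Y))) \<le> norm (X - Y)" for s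
  proof -
    have "norm (exp (s *\<^sub>R X) * (X - Y) * exp (s *\<^sub>R (- Y))) \<le> norm (exp (s *\<^sub>R X)) * norm (X - Y) * norm (exp (s *\<^sub>R (- Y)))"
      by (rule norm3)
    also have "\<dots> \<le> 1 * norm (X - Y) * 1"
      using norm_exp_skew[OF sX, of s] norm_exp_skew[OF skew_uminus[OF sY], of s]
      by (intro mult_mono) auto
    finally show ?thesis by simp
  qed
  have "norm (k 1 - k 0) \<le> norm (X - Y) * \<bar>1 - 0\<bar>" by (rule vd_bound[OF dk bk])
  then have k1: "norm (exp X * exp (- Y) - 1) \<le> norm (X - Y)" by (simp add: k_def)
  have "exp (- Y) * exp Y = 1" using exp_inv[of 1 "- Y"] by simp
  then have "exp X * exp (- Y) * exp Y = exp X" by (simp add: mult.assoc)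
  then have "exp X - exp Y = (exp X * exp (- Y) - 1) * exp Y" by (simp add: algebra_simps)
  then have "norm (exp X - exp Y) \<le> norm (exp X * exp (- Y) - 1) * norm (exp Y)"
    by (simp add: norm_mult_ineq)
  also have "\<dots> \<le> norm (X - Y) * 1"
    using norm_exp_skew[OF sY, of 1] k1 by (intro mult_mono) auto
  finally show ?thesis by simp
qed


lemma int_piece:
  fixes g :: "real \<Rightarrow> 'a::banach"
  assumes ab: "a \<le> b" and cg: "continuous_on {a..b} g"
    and K: "\<And>s. s \<in> {a..b} \<Longrightarrow> norm (g s - c) \<le> K"
  shows "norm (integral {a..b} g - (b - a) *\<^sub>R c) \<le> K * (b - a)"
proof -
  have ig: "g integrable_on {a..b}" by (rule integrable_continuous_interval[OF cg])
  have "integral {a..b} (\<lambda>s. g s - c) = integral {a..b} g - integral {a..b} (\<lambda>s. c)"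
    by (rule integral_diff[OF ig integrable_const_ivl])
  also have "\<dots> = integral {a..b} g - (b - a) *\<^sub>R c" using ab by simp
  finally have e: "integral {a..b} (\<lambda>s. g s - c) = integral {a..b} g - (b - a) *\<^sub>R c" .
  have "norm (integral {a..b} (\<lambda>s. g s - c)) \<le> K * (b - a)"
    by (rule integral_bound[OF ab]) (auto intro!: continuous_intros cg K)
  then show ?thesis by (simp add: e)
qed

lemma int_split:
  fixes g :: "real \<Rightarrow> 'a::banach"
  assumes d: "d \<ge> 0" and cg: "continuous_on {t0..t0 + real N * d} g"
  shows "integral {t0..t0 + real N * d} g = (\<Sum>p<N. integral {t0 + real p * d..t0 + real p * d + d} g)"
  using cg
proof (induction N)
  case 0
  then show ?case by simp
next
  case (Suc N)
  have sub: "{t0..t0 + real N * d} \<subseteq> {t0..t0 + real (Suc N) * d}" using d by (auto simp: algebra_simps)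
  have i: "g integrable_on {t0..t0 + real (Suc N) * d}" by (rule integrable_continuous_interval[OF Suc.prems])
  have le1: "t0 \<le> t0 + real N * d" using d by simp
  have le2: "t0 + real N * d \<le> t0 + real (Suc N) * d" using d by (simp add: algebra_simps)
  have "integral {t0..t0 + real N * d} g + integral {t0 + real N * d..t0 + real (Suc N) * d} g
      = integral {t0..t0 + real (Suc N) * d} g"
    by (rule Henstock_Kurzweil_Integration.integral_combine[OF le1 le2 i])
  moreover have "integral {t0..t0 + real N * d} g = (\<Sum>p<N. integral {t0 + real p * d..t0 + real p * d + d} g)"
    using Suc.IH Suc.prems continuous_on_subset[OF _ sub] by blast
  ultimately show ?case by (simp add: algebra_simps)
qed

lemma sum_4p2: "(\<Sum>p<N. 4 * real p + 2) = 2 * (real N)^2"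
  by (induction N) (simp_all add: power2_eq_square algebra_simps)

lemma norm_comm_le: "norm ((x::'a::real_normed_algebra) * y - y * x) \<le> 2 * norm x * norm y"
proof -
  have "norm (x * y - y * x) \<le> norm (x * y) + norm (y * x)" by (rule norm_triangle_ineq4)
  also have "\<dots> \<le> norm x * norm y + norm y * norm x" by (intro add_mono norm_mult_ineq)
  finally show ?thesis by simp
qed

locale quad =
  fixes f :: "real \<Rightarrow> 'a::{real_normed_algebra,banach}" and Bn Cn d t0 :: real
  assumes cf: "continuous_on UNIV f"
    and bnd: "\<And>t. norm (f t) \<le> Bn"
    and lip: "\<And>s t. norm (f s - f t) \<le> Cn * \<bar>s - t\<bar>"
    and d: "d \<ge> 0"
begin

lemma Cn: "Cn \<ge> 0"
proof -
  have "norm (f 1 - f 0) \<le> Cn" using lip[of 1 0] by simp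
  then show ?thesis using norm_ge_zero[of "f 1 - f 0"] by linarith
qed
lemma Bn: "Bn \<ge> 0"
  using bnd[of 0] norm_ge_zero[of "f 0"] by linarith

lemma cf': "continuous_on S f" using cf continuous_on_subset by blast

lemma left_piece:
  "norm (integral {a..a + d} f - d *\<^sub>R f a) \<le> Cn * d * d"
proof -
  have "norm (integral {a..a + d} f - (a + d - a) *\<^sub>R f a) \<le> (Cn * d) * (a + d - a)"
  proof (rule int_piece)
    fix s assume "s \<in> {a..a+d}"
    then have "\<bar>s - a\<bar> \<le> d" by auto
    then show "norm (f s - f a) \<le> Cn * d"
      using lip[of s a] mult_left_mono[OF _ Cn] by (smt (verit))
  qed (use d cf' in auto)
  then show ?thesis by simp
qed

lemma right_piece:
  "norm (integral {a..a + d} f - d *\<^sub>R f (a + d)) \<le> Cn * d * d"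
proof -
  have "norm (integral {a..a + d} f - (a + d - a) *\<^sub>R f (a + d)) \<le> (Cn * d) * (a + d - a)"
  proof (rule int_piece)
    fix s assume "s \<in> {a..a+d}"
    then have "\<bar>s - (a + d)\<bar> \<le> d" by auto
    then show "norm (f s - f (a + d)) \<le> Cn * d"
      using lip[of s "a + d"] mult_left_mono[OF _ Cn] by (smt (verit))
  qed (use d cf' in auto)
  then show ?thesis by simp
qed

lemma left_sum:
  "norm (integral {t0..t0 + real N * d} f - (\<Sum>p<N. d *\<^sub>R f (t0 + real p * d))) \<le> real N * (Cn * d * d)"
proof -
  have eq: "integral {t0..t0 + real N * d} f - (\<Sum>p<N. d *\<^sub>R f (t0 + real p * d))
      = (\<Sum>p<N. integral {t0 + real p * d..t0 + real p * d + d} f - d *\<^sub>R f (t0 + real p * d))"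
    using int_split[OF d cf', of t0 N] by (simp only: sum_subtractf)
  have "norm (\<Sum>p<N. integral {t0 + real p * d..t0 + real p * d + d} f - d *\<^sub>R f (t0 + real p * d)) \<le> (\<Sum>p<N. norm (integral {t0 + real p * d..t0 + real p * d + d} f - d *\<^sub>R f (t0 + real p * d)))"
    by (rule norm_sum)
  also have "\<dots> \<le> (\<Sum>p<N. Cn * d * d)"
  proof (rule sum_mono)
    fix p
    show "norm (integral {t0 + real p * d..t0 + real p * d + d} f - d *\<^sub>R f (t0 + real p * d)) \<le> Cn * d * d"
      by (rule left_piece[of "t0 + real p * d"])
  qed
  also have "\<dots> = real N * (Cn * d * d)" by simp
  finally show ?thesis by (simp only: eq)
qed

definition F where "F s = integral {t0..s} f"
definition S where "S p = (\<Sum>q\<in>{1..p}. d *\<^sub>R f (t0 + real q * d))"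

lemma right_sum:
  "norm (F (t0 + real p * d) - S p) \<le> real p * (Cn * d * d)"
proof -
  have "S p = (\<Sum>q<p. d *\<^sub>R f (t0 + real q * d + d))"
    unfolding S_def by (simp add: sum.atLeast1_atMost_eq algebra_simps)
  then have eq: "F (t0 + real p * d) - S p
      = (\<Sum>q<p. integral {t0 + real q * d..t0 + real q * d + d} f - d *\<^sub>R f (t0 + real q * d + d))"
    using int_split[OF d cf', of t0 p] by (simp only: F_def sum_subtractf)
  have "norm (\<Sum>q<p. integral {t0 + real q * d..t0 + real q * d + d} f - d *\<^sub>R f (t0 + real q * d + d)) \<le> (\<Sum>q<p. norm (integral {t0 + real q * d..t0 + real q * d + d} f - d *\<^sub>R f (t0 + real q * d + d)))"
    by (rule norm_sum)
  also have "\<dots> \<le> (\<Sum>q<p. Cn * d * d)"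
  proof (rule sum_mono)
    fix q
    show "norm (integral {t0 + real q * d..t0 + real q * d + d} f - d *\<^sub>R f (t0 + real q * d + d)) \<le> Cn * d * d"
      by (rule right_piece[of "t0 + real q * d"])
  qed
  also have "\<dots> = real p * (Cn * d * d)" by simp
  finally show ?thesis by (simp only: eq)
qed

lemma S_norm: "norm (S p) \<le> real p * d * Bn"
proof -
  have "norm (S p) \<le> (\<Sum>q\<in>{1..p}. norm (d *\<^sub>R f (t0 + real q * d)))"
    unfolding S_def by (rule norm_sum)
  also have "\<dots> \<le> (\<Sum>q\<in>{1..p}. d * Bn)"
    by (rule sum_mono) (use d bnd in \<open>simp add: mult_left_mono\<close>)
  also have "\<dots> = real p * d * Bn" by simp
  finally show ?thesis .
qed

lemma F_cont: "continuous_on {t0..T} F"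
  unfolding F_def
  by (rule indefinite_integral_continuous_1) (rule integrable_continuous_interval[OF cf'])

end


context quad
begin

lemma G_cont: "continuous_on {t0..T} (\<lambda>s. F s * f s - f s * F s)"
  using F_cont[of T] cf'[of "{t0..T}"] by (intro continuous_intros) auto

lemma G_piece:
  assumes s: "s \<in> {t0 + real p * d..t0 + real p * d + d}"
  shows "norm ((F s * f s - f s * F s) - (S p * f (t0 + real p * d) - f (t0 + real p * d) * S p))
         \<le> (4 * real p + 2) * (d * d * Bn * Cn)"
proof -
  define a where "a = t0 + real p * d"
  have as: "a \<le> s" "s \<le> a + d" using s by (auto simp: a_def)
  have t0a: "t0 \<le> a" using d by (simp add: a_def)
  have Fs: "F s = F a + integral {a..s} f"
    unfolding F_def
    by (rule Henstock_Kurzweil_Integration.integral_combine[OF t0a as(1) integrable_continuous_interval[OF cf'], symmetric])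
  define E where "E = integral {a..s} f - (s - a) *\<^sub>R f s"
  have nE: "norm E \<le> Cn * d * d"
  proof -
    have "norm E \<le> (Cn * d) * (s - a)"
      unfolding E_def
    proof (rule int_piece[OF as(1) cf'])
      fix \<sigma> assume "\<sigma> \<in> {a..s}"
      then have "\<bar>\<sigma> - s\<bar> \<le> d" using as by auto
      then show "norm (f \<sigma> - f s) \<le> Cn * d"
        using lip[of \<sigma> s] mult_left_mono[OF _ Cn] by (smt (verit))
    qed
    also have "\<dots> \<le> (Cn * d) * d" using as Cn d by (intro mult_left_mono) auto
    finally show ?thesis .
  qed
  define D where "D = F a - S p"
  have nD: "norm D \<le> real p * (Cn * d * d)" unfolding D_def a_def by (rule right_sum)
  define y where "y = f s"
  define y0 where "y0 = f a"
  have Fs': "F s = S p + D + (s - a) *\<^sub>R y + E" by (simp add: Fs D_def E_def y_def)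
  have eq: "(F s * y - y * F s) - (S p * y0 - y0 * S p)
      = (D * y - y * D) + (S p * (y - y0) - (y - y0) * S p) + (E * y - y * E)"
    unfolding Fs' by (simp add: algebra_simps)
  have ny: "norm y \<le> Bn" by (simp add: y_def bnd)
  have nyy: "norm (y - y0) \<le> Cn * d"
  proof -
    have "\<bar>s - a\<bar> \<le> d" using as by auto
    then show ?thesis using lip[of s a] mult_left_mono[OF _ Cn] unfolding y_def y0_def by (smt (verit))
  qed
  have nS: "norm (S p) \<le> real p * d * Bn" by (rule S_norm)
  have "norm ((F s * y - y * F s) - (S p * y0 - y0 * S p))
      \<le> norm (D * y - y * D) + norm (S p * (y - y0) - (y - y0) * S p) + norm (E * y - y * E)"
    unfolding eq
    using norm_triangle_ineq[of "D * y - y * D + (S p * (y - y0) - (y - y0) * S p)" "E * y - y * E"]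
      norm_triangle_ineq[of "D * y - y * D" "S p * (y - y0) - (y - y0) * S p"] by linarith
  also have "\<dots> \<le> 2 * norm D * norm y + 2 * norm (S p) * norm (y - y0) + 2 * norm E * norm y"
    by (intro add_mono norm_comm_le)
  also have "\<dots> \<le> 2 * (real p * (Cn * d * d)) * Bn + 2 * (real p * d * Bn) * (Cn * d) + 2 * (Cn * d * d) * Bn"
    using nD ny nyy nS nE Bn Cn d
    by (intro add_mono mult_mono) (auto intro!: mult_nonneg_nonneg)
  also have "\<dots> = (4 * real p + 2) * (d * d * Bn * Cn)" by (simp add: algebra_simps)
  finally show ?thesis by (simp add: y_def y0_def a_def)
qed

lemma G_sum:
  "norm (integral {t0..t0 + real N * d} (\<lambda>s. F s * f s - f s * F s)
     - (\<Sum>p<N. d *\<^sub>R (S p * f (t0 + real p * d) - f (t0 + real p * d) * S p)))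
   \<le> 2 * (real N)^2 * (d * d * d * Bn * Cn)"
proof -
  let ?G = "\<lambda>s. F s * f s - f s * F s"
  let ?c = "\<lambda>p. S p * f (t0 + real p * d) - f (t0 + real p * d) * S p"
  have eq: "integral {t0..t0 + real N * d} ?G - (\<Sum>p<N. d *\<^sub>R ?c p)
      = (\<Sum>p<N. integral {t0 + real p * d..t0 + real p * d + d} ?G - d *\<^sub>R ?c p)"
    using int_split[OF d G_cont[of "t0 + real N * d"]] by (simp only: sum_subtractf)
  have "norm (\<Sum>p<N. integral {t0 + real p * d..t0 + real p * d + d} ?G - d *\<^sub>R ?c p) \<le> (\<Sum>p<N. norm (integral {t0 + real p * d..t0 + real p * d + d} ?G - d *\<^sub>R ?c p))"
    by (rule norm_sum)
  also have "\<dots> \<le> (\<Sum>p<N. ((4 * real p + 2) * (d * d * Bn * Cn)) * d)"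
  proof (rule sum_mono)
    fix p
    have sub: "{t0 + real p * d..t0 + real p * d + d} \<subseteq> {t0..t0 + real p * d + d}" using d by auto
    have "norm (integral {t0 + real p * d..t0 + real p * d + d} ?G - (t0 + real p * d + d - (t0 + real p * d)) *\<^sub>R ?c p)
        \<le> ((4 * real p + 2) * (d * d * Bn * Cn)) * (t0 + real p * d + d - (t0 + real p * d))"
      by (rule int_piece[OF _ continuous_on_subset[OF G_cont sub] G_piece]) (use d in auto)
    then show "norm (integral {t0 + real p * d..t0 + real p * d + d} ?G - d *\<^sub>R ?c p)
        \<le> ((4 * real p + 2) * (d * d * Bn * Cn)) * d" by simp
  qed
  also have "\<dots> = (\<Sum>p<N. 4 * real p + 2) * (d * d * d * Bn * Cn)"
    unfolding sum_distrib_right by (rule sum.cong) (simp_all add: algebra_simps)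
  also have "\<dots> = 2 * (real N)^2 * (d * d * d * Bn * Cn)" by (simp add: sum_4p2)
  finally show ?thesis by (simp only: eq)
qed

end


lemma norm_cscale_vec: "norm (\<chi> k. c * (y::complex^'n::finite) $ k) = cmod c * norm y"
proof -
  have "norm (\<chi> k. c * y $ k) = L2_set (\<lambda>k. cmod c * norm (y $ k)) UNIV"
    by (simp add: norm_vec_def norm_mult)
  also have "\<dots> = cmod c * L2_set (\<lambda>k. norm (y $ k)) UNIV"
    by (rule L2_set_right_distrib[symmetric]) simp
  finally show ?thesis by (simp add: norm_vec_def)
qed

lemma specnorm_cscale: "specnorm (cscale c (X::'n::finite cmat)) \<le> cmod c * specnorm X"
proof (rule specnorm_le)
  fix u :: "complex^'n"
  have "cscale c X *v u = (\<chi> k. c * (X *v u) $ k)"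
    by (simp add: vec_eq_iff matrix_vector_mult_def cscale_def sum_distrib_left mult.assoc)
  then have "norm (cscale c X *v u) = cmod c * norm (X *v u)" by (simp add: norm_cscale_vec)
  also have "\<dots> \<le> cmod c * (specnorm X * norm u)" by (intro mult_left_mono specnorm_ge) simp
  finally show "norm (cscale c X *v u) \<le> cmod c * specnorm X * norm u" by (simp add: mult.assoc)
qed

lemma mat_of_sum: "mat_of (sum f S) = (\<Sum>x\<in>S. mat_of (f x))"
  by (induction S rule: infinite_finite_induct) simp_all

lemma comm_mat_of: "comm (mat_of x) (mat_of y) = mat_of (x * y - y * x)"
  by (simp add: comm_def)

lemma integral_mat_of:
  assumes "g integrable_on S"
  shows "integral S (\<lambda>s. mat_of (g s)) = mat_of (integral S g)"
  using integral_linear[OF assms bl_mat_of] by (simp add: o_def)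

theorem corollary3:
  fixes A B :: "complex^'n::finite^'n"
    and tj h :: real and M :: nat
  assumes "hermitian A" and "hermitian B"
    and "h > 0" and "M > 0"
  shows "specnorm (U2 A B tj h - U2tilde A B tj h M)
         \<le> h^2 / real M * specnorm (comm A B)
           + 3 * h^3 / real M * specnorm B * specnorm (comm A B)"
proof -
  define a where "a = Opm (cscale \<i> A)"
  define b where "b = Opm (cscale (- \<i>) B)"
  have sa: "skew a" unfolding a_def by (rule skew_herm[OF assms(1)])
  have cB: "cscale (- \<i>) B = - cscale \<i> B"
    using cscale_cscale[of "-1" "\<i>" B] by (simp add: cscale_m1)
  have sb: "skew b" unfolding b_def cB Opm_uminus by (rule skew_uminus[OF skew_herm[OF assms(2)]])
  define \<alpha> where "\<alpha> = alpha a b"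
  have Af: "Afun A B t = mat_of (\<alpha> t)" for t
    using Afun_opm[of A B t] by (metis Opm_inv alpha_def \<alpha>_def a_def b_def)
  have Afun_eq: "Afun A B = (\<lambda>t. mat_of (\<alpha> t))" using Af by (rule ext)
  define Cn where "Cn = specnorm (comm A B)"
  have abC: "a * b - b * a = Opm (comm A B)"
  proof -
    have "comm (cscale \<i> A) (cscale (- \<i>) B) = comm A B"
      by (simp add: comm_cscale cscale_one)
    then show ?thesis unfolding a_def b_def by (metis Opm_comm)
  qed
  have nC: "norm (a * b - b * a) = Cn" by (simp add: abC Cn_def specnorm_Opm)
  define Bn where "Bn = norm b"
  have BnB: "Bn \<le> specnorm B"
  proof -
    have "Bn = specnorm (cscale (- \<i>) B)" by (simp add: Bn_def b_def specnorm_Opm)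
    also have "\<dots> \<le> cmod (- \<i>) * specnorm B" by (rule specnorm_cscale)
    finally show ?thesis by simp
  qed
  define d where "d = h / real M"
  have d0: "d \<ge> 0" using assms by (simp add: d_def)
  interpret Q: quad \<alpha> Bn Cn d tj
  proof
    show "continuous_on UNIV \<alpha>" unfolding \<alpha>_def by (rule alpha_cont)
    show "norm (\<alpha> t) \<le> Bn" for t unfolding \<alpha>_def Bn_def by (rule alpha_norm[OF sa])
    show "norm (\<alpha> s - \<alpha> t) \<le> Cn * \<bar>s - t\<bar>" for s t
      unfolding \<alpha>_def nC[symmetric] by (rule alpha_lip[OF sa])
  qed (rule d0)
  have sal: "skew (\<alpha> t)" for t unfolding \<alpha>_def by (rule alpha_skew[OF sa sb])
  have intA: "\<alpha> integrable_on {x..y}" for x y by (rule integrable_continuous_interval[OF Q.cf'])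
  have hM: "tj + h = tj + real M * d" using assms by (simp add: d_def)
  define G where "G s = Q.F s * \<alpha> s - \<alpha> s * Q.F s" for s
  define I1 where "I1 = integral {tj..tj + real M * d} \<alpha>"
  define I2 where "I2 = integral {tj..tj + real M * d} G"
  define \<Sigma>1 where "\<Sigma>1 = (\<Sum>p<M. d *\<^sub>R \<alpha> (tj + real p * d))"
  define \<Sigma>2 where "\<Sigma>2 = (\<Sum>p<M. d *\<^sub>R (Q.S p * \<alpha> (tj + real p * d) - \<alpha> (tj + real p * d) * Q.S p))"
  have O2: "Omega2 A B tj h = mat_of (I1 - (1/2) *\<^sub>R I2)"
  proof -
    have inner: "comm (integral {tj..s} (Afun A B)) (Afun A B s) = mat_of (G s)" for s
      unfolding Afun_eq integral_mat_of[OF intA] comm_mat_of G_def Q.F_def ..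
    have GI: "G integrable_on {tj..tj + real M * d}"
      unfolding G_def by (rule integrable_continuous_interval[OF Q.G_cont])
    show ?thesis
      unfolding Omega2_def hM inner integral_mat_of[OF GI] I1_def I2_def
      unfolding Afun_eq integral_mat_of[OF intA] by simp
  qed
  have O2t: "U2tilde A B tj h M = mexp (mat_of (\<Sigma>1 - (1/2) *\<^sub>R \<Sigma>2))"
  proof -
    have tp: "tj + real p * h / real M = tj + real p * d" for p by (simp add: d_def)
    have H: "Hfun A B t = cscale \<i> (mat_of (\<alpha> t))" for t by (simp add: Hfun_Afun Af)
    have e1: "cscale (- \<i>) (\<Sum>p<M. d *\<^sub>R cscale \<i> (mat_of (\<alpha> (tj + real p * d))))
        = mat_of \<Sigma>1"
      by (simp add: cscale_sum cscale_scaleR cscale_cscale cscale_one \<Sigma>1_def mat_of_sum)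
    have e2: "comm (\<Sum>q\<in>{1..p}. d *\<^sub>R cscale \<i> (mat_of (\<alpha> (tj + real q * d)))) (cscale \<i> (mat_of (\<alpha> (tj + real p * d))))
        = - mat_of (Q.S p * \<alpha> (tj + real p * d) - \<alpha> (tj + real p * d) * Q.S p)" for p
    proof -
      have "(\<Sum>q\<in>{1..p}. d *\<^sub>R cscale \<i> (mat_of (\<alpha> (tj + real q * d)))) = cscale \<i> (mat_of (Q.S p))"
        by (simp add: Q.S_def cscale_sum cscale_scaleR mat_of_sum)
      then show ?thesis
        by (simp add: comm_cscale comm_mat_of cscale_m1)
    qed
    show ?thesis
      unfolding U2tilde_def tp H d_def[symmetric] e1 e2
      by (simp add: \<Sigma>1_def \<Sigma>2_def mat_of_sum scaleR_sum_right sum_negf sum_subtractf scaleR_diff_right diff_diff_eq2 add_diff_eq)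
  qed
  have sF: "skew (Q.F s)" for s unfolding Q.F_def by (rule skew_integral[OF sal])
  have sG: "skew (G s)" for s unfolding G_def by (rule skew_comm[OF sF sal])
  have sI1: "skew I1" unfolding I1_def by (rule skew_integral[OF sal])
  have sI2: "skew I2" unfolding I2_def by (rule skew_integral[OF sG])
  have sS: "skew (Q.S p)" for p unfolding Q.S_def by (intro skew_sum skew_scaleR sal)
  have sS1: "skew \<Sigma>1" unfolding \<Sigma>1_def by (intro skew_sum skew_scaleR sal)
  have sS2: "skew \<Sigma>2" unfolding \<Sigma>2_def by (intro skew_sum skew_scaleR skew_comm sS sal)
  have sO: "skew (I1 - (1/2) *\<^sub>R I2)" by (intro skew_diff skew_scaleR sI1 sI2)
  have sOt: "skew (\<Sigma>1 - (1/2) *\<^sub>R \<Sigma>2)" by (intro skew_diff skew_scaleR sS1 sS2)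
  have L: "norm (I1 - \<Sigma>1) \<le> real M * (Cn * d * d)"
    unfolding I1_def \<Sigma>1_def by (rule Q.left_sum)
  have Gfun: "G = (\<lambda>s. Q.F s * \<alpha> s - \<alpha> s * Q.F s)" by (rule ext) (simp add: G_def)
  have R: "norm (I2 - \<Sigma>2) \<le> 2 * (real M)^2 * (d * d * d * Bn * Cn)"
    unfolding I2_def \<Sigma>2_def Gfun by (rule Q.G_sum)
  have "specnorm (U2 A B tj h - U2tilde A B tj h M)
      = norm (exp (I1 - (1/2) *\<^sub>R I2) - exp (\<Sigma>1 - (1/2) *\<^sub>R \<Sigma>2))"
    unfolding U2_def O2 O2t mexp_exp specnorm_Opm by (simp add: Opm_diff Opm_scaleR)
  also have "\<dots> \<le> norm ((I1 - (1/2) *\<^sub>R I2) - (\<Sigma>1 - (1/2) *\<^sub>R \<Sigma>2))"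
    by (rule exp_diff_skew[OF sO sOt])
  also have "(I1 - (1/2) *\<^sub>R I2) - (\<Sigma>1 - (1/2) *\<^sub>R \<Sigma>2) = (I1 - \<Sigma>1) - (1/2) *\<^sub>R (I2 - \<Sigma>2)"
    by (simp add: algebra_simps)
  also have "norm \<dots> \<le> norm (I1 - \<Sigma>1) + (1/2) * norm (I2 - \<Sigma>2)"
    using norm_triangle_ineq4[of "I1 - \<Sigma>1" "(1/2) *\<^sub>R (I2 - \<Sigma>2)"] by simp
  also have "\<dots> \<le> real M * (Cn * d * d) + (1/2) * (2 * (real M)^2 * (d * d * d * Bn * Cn))"
    using L R by linarith
  also have "\<dots> = h^2 / real M * Cn + h^3 / real M * Bn * Cn"
    using assms(4) by (simp add: d_def field_simps power2_eq_square power3_eq_cube)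
  also have "\<dots> \<le> h^2 / real M * Cn + 3 * h^3 / real M * specnorm B * Cn"
  proof -
    have C0: "Cn \<ge> 0" by (rule Q.Cn)
    have B0: "Bn \<ge> 0" by (rule Q.Bn)
    have hm: "h^3 / real M \<ge> 0" using assms by simp
    have "Bn \<le> 3 * specnorm B" using BnB B0 by linarith
    then have "h^3 / real M * Bn * Cn \<le> h^3 / real M * (3 * specnorm B) * Cn"
      using C0 hm by (intro mult_right_mono mult_left_mono) auto
    then show ?thesis by (simp add: mult.commute mult.left_commute)
  qed
  finally show ?thesis by (simp add: Cn_def)
qed

end
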